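(* Let $q\geq 2$ be an integer and $f\in L^2(\mathbb{R}_+^q)$. Let $r\in \{1,\ldots, q-1\}$ and $r' \in \{1,\ldots,q\}$ be such that $r'+2r >2q$. Then, for every integer $p\geq 1$ and every $g\in L^2(\mathbb{R}_+^{p})$ with $r'+2r-2q\le p$, $$((g \otimes f) \frown_r f) \frown_{r'} f =g \frown_{r'+2r-2q} ((f \frown_r f) \frown_{2q-2r} f).$$ In particular, if $(f_n)$ is a sequence in $L^2(\mathbb{R}_+^q)$ such that $(f_n\frown_s f_n)\frown_{s'}f_n\to0$ in $L^2$ for all $s,s'\in\{1,\ldots,q-1\}$ with $s'+2s\le 2q$ and $s+s'\neq q$, then $((g\otimes f_n) \frown_r f_n) \frown_{r'} f_n \to 0$ in $L^2(\mathbb{R}_+^{p+3q-2r-2r'})$ as $n\to\infty$.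
   Context: Contraction: for $a\in L^2(\mathbb{R}_+^m)$, $b\in L^2(\mathbb{R}_+^k)$ and $1\le s\le m\wedge k$, $a\frown_s b(t_1,\ldots,t_{m+k-2s})=\int a(t_1,\ldots,t_{m-s},x_1,\ldots,x_s)b(x_s,\ldots,x_1,t_{m-s+1},\ldots,t_{m+k-2s})\,dx_1\cdots dx_s$; $a\frown_0 b=a\otimes b$. *)

theory Defs
  imports "HOL-Analysis.Analysis"
begin

text \<open>The half-line R_+ with Lebesgue measure, and R_+^m as a finite product
  measure indexed by {..<m} (coordinates 0,...,m-1; points are extensional).\<close>
definition Rp :: "real measure" where
  "Rp = restrict_space lborel {0..}"

definition Mq :: "nat \<Rightarrow> (nat \<Rightarrow> real) measure" where
  "Mq m = PiM {..<m} (\<lambda>_. Rp)"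

definition L2 :: "nat \<Rightarrow> ((nat \<Rightarrow> real) \<Rightarrow> real) \<Rightarrow> bool" where
  "L2 m f \<longleftrightarrow> f \<in> borel_measurable (Mq m) \<and> integrable (Mq m) (\<lambda>x. (f x)\<^sup>2)"

definition L2norm :: "nat \<Rightarrow> ((nat \<Rightarrow> real) \<Rightarrow> real) \<Rightarrow> real" where
  "L2norm m f = sqrt (\<integral>x. (f x)\<^sup>2 \<partial>Mq m)"

definition tensor :: "nat \<Rightarrow> nat \<Rightarrow> ((nat \<Rightarrow> real) \<Rightarrow> real) \<Rightarrow> ((nat \<Rightarrow> real) \<Rightarrow> real)
    \<Rightarrow> (nat \<Rightarrow> real) \<Rightarrow> real" where
  "tensor m k a b = (\<lambda>t. a (\<lambda>i. if i < m then t i else undefined)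
                        * b (\<lambda>i. if i < k then t (m + i) else undefined))"

text \<open>Contraction a \<frown>_s b for a on R_+^m, b on R_+^k, 0 \<le> s \<le> min m k:
  (a \<frown>_s b)(t_1..t_{m+k-2s}) = \<integral> a(t_1..t_{m-s},x_1..x_s) b(x_s..x_1,t_{m-s+1}..t_{m+k-2s}) dx,
  and a \<frown>_0 b = a \<otimes> b.  (0-based indices below.)\<close>
definition contr :: "nat \<Rightarrow> nat \<Rightarrow> nat \<Rightarrow> ((nat \<Rightarrow> real) \<Rightarrow> real) \<Rightarrow> ((nat \<Rightarrow> real) \<Rightarrow> real)
    \<Rightarrow> (nat \<Rightarrow> real) \<Rightarrow> real" where
  "contr m k s a b =
    (if s = 0 then tensor m k a b
     else (\<lambda>t. \<integral>x. a (\<lambda>i. if i < m - s then t i else if i < m then x (i - (m - s)) else undefined)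
                  * b (\<lambda>i. if i < s then x (s - 1 - i)
                           else if i < k then t (m - s + (i - s)) else undefined) \<partial>Mq s))"

end

theory Submission
  imports Defs
begin


lemma sf_Rp: "sigma_finite_measure Rp"
  unfolding Rp_def
  by (rule sigma_finite_measure_restrict_space) (auto simp: lborel.sigma_finite_measure_axioms)

interpretation PS: product_sigma_finite "\<lambda>_. Rp"
  unfolding product_sigma_finite_def using sf_Rp by simp

lemma sf_Mq: "sigma_finite_measure (Mq n)"
  unfolding Mq_def by (rule PS.sigma_finite) simp

lemma psf: "pair_sigma_finite (Mq m) (Mq n)"
  unfolding pair_sigma_finite_def using sf_Mq by simp

lemma space_Rp: "space Rp = {0..}"
  unfolding Rp_def by simp

lemma space_Mq: "space (Mq n) = (\<Pi>\<^sub>E i\<in>{..<n}. {0::real..})"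
  unfolding Mq_def by (simp add: space_PiM space_Rp)

lemma meas_coord: "j < n \<Longrightarrow> (\<lambda>x. x j) \<in> measurable (Mq n) Rp"
  unfolding Mq_def by (rule measurable_component_singleton) simp

lemma meas_Mq:
  assumes "\<And>i. i < n \<Longrightarrow> (\<lambda>x. h x i) \<in> measurable M Rp"
    and "\<And>x i. n \<le> i \<Longrightarrow> h x i = undefined"
  shows "h \<in> measurable M (Mq n)"
proof -
  have "(\<lambda>x i. h x i) \<in> measurable M (Mq n)"
    unfolding Mq_def
  proof (rule measurable_PiM_single')
    show "\<And>i. i \<in> {..<n} \<Longrightarrow> (\<lambda>x. h x i) \<in> measurable M Rp" using assms(1) by auto
    show "(\<lambda>x i. h x i) \<in> space M \<rightarrow> (\<Pi>\<^sub>E i\<in>{..<n}. space Rp)"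
      using assms measurable_space[OF assms(1)] by (auto simp: PiE_iff extensional_def)
  qed
  then show ?thesis by simp
qed

lemma meas_If_const: "(P \<Longrightarrow> f \<in> measurable M N) \<Longrightarrow> (\<not>P \<Longrightarrow> g \<in> measurable M N) \<Longrightarrow>
   (\<lambda>x. if P then f x else g x) \<in> measurable M N"
  by (cases P) auto

definition jn :: "nat \<Rightarrow> nat \<Rightarrow> (nat \<Rightarrow> real) \<times> (nat \<Rightarrow> real) \<Rightarrow> nat \<Rightarrow> real" where
  "jn m n = (\<lambda>(x,y). \<lambda>i. if i < m then x i else if i < m + n then y (i - m) else undefined)"

definition rv :: "nat \<Rightarrow> (nat \<Rightarrow> real) \<Rightarrow> nat \<Rightarrow> real" where
  "rv n x = (\<lambda>i. if i < n then x (n - 1 - i) else undefined)"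

lemma meas_jn: "jn m n \<in> measurable (Mq m \<Otimes>\<^sub>M Mq n) (Mq (m+n))"
proof (rule meas_Mq)
  fix i assume i: "i < m + n"
  show "(\<lambda>x. jn m n x i) \<in> measurable (Mq m \<Otimes>\<^sub>M Mq n) Rp"
    unfolding jn_def split_beta
    using i by (auto intro!: meas_If_const measurable_compose[OF measurable_fst meas_coord]
        measurable_compose[OF measurable_snd meas_coord])
qed (simp add: jn_def split_beta)

lemma meas_rv: "rv n \<in> measurable (Mq n) (Mq n)"
  by (rule meas_Mq) (auto simp: rv_def intro!: meas_If_const meas_coord)



lemma distr_jn: "distr (Mq m \<Otimes>\<^sub>M Mq n) (Mq (m+n)) (jn m n) = Mq (m+n)"
  unfolding Mq_def[of "m+n"]
proof (rule PS.PiM_eqI)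
  show "sets (distr (Mq m \<Otimes>\<^sub>M Mq n) (Pi\<^sub>M {..<m + n} (\<lambda>_. Rp)) (jn m n)) = sets (Pi\<^sub>M {..<m + n} (\<lambda>_. Rp))" by simp
  fix A assume A: "\<And>i. i \<in> {..<m+n} \<Longrightarrow> A i \<in> sets Rp"
  have AS: "\<And>i. i \<in> {..<m+n} \<Longrightarrow> A i \<subseteq> {0..}" using sets.sets_into_space[OF A] space_Rp by auto
  have *: "jn m n -` Pi\<^sub>E {..<m+n} A \<inter> space (Mq m \<Otimes>\<^sub>M Mq n)
      = Pi\<^sub>E {..<m} A \<times> Pi\<^sub>E {..<n} (\<lambda>i. A (m+i))"
  proof (intro set_eqI iffI)
    fix z assume hz: "z \<in> jn m n -` Pi\<^sub>E {..<m+n} A \<inter> space (Mq m \<Otimes>\<^sub>M Mq n)"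
    obtain x y where z: "z = (x,y)" by (cases z)
    have h: "jn m n (x,y) \<in> Pi\<^sub>E {..<m+n} A" "(x,y) \<in> space (Mq m \<Otimes>\<^sub>M Mq n)" using hz z by auto
    have "x \<in> Pi\<^sub>E {..<m} A"
    proof -
      have "x \<in> extensional {..<m}" using h(2) by (simp add: space_pair_measure space_Mq PiE_iff)
      moreover have "\<And>i. i<m \<Longrightarrow> x i \<in> A i" using h(1) by (auto simp: jn_def PiE_iff split: if_splits)
      ultimately show ?thesis by (auto simp: PiE_iff)
    qed
    moreover have "y \<in> Pi\<^sub>E {..<n} (\<lambda>i. A (m+i))"
    proof -
      have "y \<in> extensional {..<n}" using h(2) by (simp add: space_pair_measure space_Mq PiE_iff)
      moreover have "\<And>i. i<n \<Longrightarrow> y i \<in> A (m+i)"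
      proof -
        fix i assume "i<n"
        then have "jn m n (x,y) (m+i) \<in> A (m+i)" using h(1) by (auto simp: PiE_iff)
        then show "y i \<in> A (m+i)" using \<open>i<n\<close> by (simp add: jn_def)
      qed
      ultimately show ?thesis by (auto simp: PiE_iff)
    qed
    ultimately show "z \<in> Pi\<^sub>E {..<m} A \<times> Pi\<^sub>E {..<n} (\<lambda>i. A (m+i))" using z by simp
  next
    fix z assume hz: "z \<in> Pi\<^sub>E {..<m} A \<times> Pi\<^sub>E {..<n} (\<lambda>i. A (m+i))"
    obtain x y where z: "z = (x,y)" by (cases z)
    have h: "x \<in> Pi\<^sub>E {..<m} A" "y \<in> Pi\<^sub>E {..<n} (\<lambda>i. A (m+i))" using hz z by auto
    have "\<And>i. i < m+n \<Longrightarrow> jn m n (x,y) i \<in> A i"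
    proof -
      fix i assume i: "i < m+n"
      show "jn m n (x,y) i \<in> A i"
      proof (cases "i < m")
        case True then show ?thesis using h(1) by (auto simp: jn_def PiE_iff)
      next
        case False then have "i - m < n" "m + (i-m) = i" using i by auto
        then have "y (i-m) \<in> A i" using h(2) by (metis PiE_mem lessThan_iff)
        then show ?thesis using False i by (simp add: jn_def)
      qed
    qed
    then have "jn m n (x,y) \<in> Pi\<^sub>E {..<m+n} A" by (auto simp: PiE_iff jn_def extensional_def)
    moreover have "(x,y) \<in> space (Mq m \<Otimes>\<^sub>M Mq n)"
    proof -
      have "x \<in> space (Mq m)"
      proof -
        have "\<And>i. i<m \<Longrightarrow> x i \<in> {0..}" using h(1) AS by (metis PiE_mem add_less_cancel_left lessThan_iff subsetD trans_less_add1)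
        then show ?thesis using h(1) by (simp add: space_Mq PiE_iff)
      qed
      moreover have "y \<in> space (Mq n)"
      proof -
        have "\<And>i. i<n \<Longrightarrow> y i \<in> {0..}" using h(2) AS by (metis PiE_mem add_less_cancel_left lessThan_iff subsetD)
        then show ?thesis using h(2) by (simp add: space_Mq PiE_iff)
      qed
      ultimately show ?thesis by (simp add: space_pair_measure)
    qed
    ultimately show "z \<in> jn m n -` Pi\<^sub>E {..<m+n} A \<inter> space (Mq m \<Otimes>\<^sub>M Mq n)" using z by simp
  qed
  interpret P: pair_sigma_finite "Mq m" "Mq n" by (rule psf)
  have "emeasure (distr (Mq m \<Otimes>\<^sub>M Mq n) (Pi\<^sub>M {..<m + n} (\<lambda>_. Rp)) (jn m n)) (Pi\<^sub>E {..<m + n} A)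
     = emeasure (Mq m \<Otimes>\<^sub>M Mq n) (jn m n -` Pi\<^sub>E {..<m+n} A \<inter> space (Mq m \<Otimes>\<^sub>M Mq n))"
    using meas_jn[of m n] A by (intro emeasure_distr) (auto simp: Mq_def)
  also have "\<dots> = emeasure (Mq m \<Otimes>\<^sub>M Mq n) (Pi\<^sub>E {..<m} A \<times> Pi\<^sub>E {..<n} (\<lambda>i. A (m+i)))"
    by (simp only: *)
  also have "\<dots> = emeasure (Mq m) (Pi\<^sub>E {..<m} A) * emeasure (Mq n) (Pi\<^sub>E {..<n} (\<lambda>i. A (m+i)))"
    using A by (intro P.M2.emeasure_pair_measure_Times) (auto simp: Mq_def intro!: sets_PiM_I_finite)
  also have "\<dots> = (\<Prod>i<m. emeasure Rp (A i)) * (\<Prod>i<n. emeasure Rp (A (m+i)))"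
    using A unfolding Mq_def by (subst PS.emeasure_PiM, simp, simp)+ simp
  also have "\<dots> = (\<Prod>i<m+n. emeasure Rp (A i))"
    by (induction n) (simp_all add: mult.assoc[symmetric])
  finally show "emeasure (distr (Mq m \<Otimes>\<^sub>M Mq n) (Pi\<^sub>M {..<m + n} (\<lambda>_. Rp)) (jn m n)) (Pi\<^sub>E {..<m + n} A) =
         (\<Prod>i\<in>{..<m + n}. emeasure Rp (A i))" .
qed simp



lemma distr_rv0: "distr (Mq n) (Pi\<^sub>M {..<n} (\<lambda>_. Rp)) (rv n) = Pi\<^sub>M {..<n} (\<lambda>_. Rp)"
proof (rule PS.PiM_eqI)
  show "sets (distr (Mq n) (Pi\<^sub>M {..<n} (\<lambda>_. Rp)) (rv n)) = sets (Pi\<^sub>M {..<n} (\<lambda>_. Rp))" by simp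
  fix A assume A: "\<And>i. i \<in> {..<n} \<Longrightarrow> A i \<in> sets Rp"
  have AS: "\<And>i. i \<in> {..<n} \<Longrightarrow> A i \<subseteq> {0..}" using sets.sets_into_space[OF A] space_Rp by auto
  have *: "rv n -` Pi\<^sub>E {..<n} A \<inter> space (Mq n) = Pi\<^sub>E {..<n} (\<lambda>j. A (n - 1 - j))"
  proof (intro set_eqI iffI)
    fix x assume hx: "x \<in> rv n -` Pi\<^sub>E {..<n} A \<inter> space (Mq n)"
    have "\<And>j. j<n \<Longrightarrow> x j \<in> A (n - 1 - j)"
    proof -
      fix j assume j: "j<n"
      then have "rv n x (n - 1 - j) \<in> A (n - 1 - j)" using hx by (auto simp: PiE_iff)
      then show "x j \<in> A (n - 1 - j)" using j by (simp add: rv_def)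
    qed
    then show "x \<in> Pi\<^sub>E {..<n} (\<lambda>j. A (n - 1 - j))" using hx by (auto simp: PiE_iff space_Mq)
  next
    fix x assume hx: "x \<in> Pi\<^sub>E {..<n} (\<lambda>j. A (n - 1 - j))"
    have "\<And>j. j<n \<Longrightarrow> rv n x j \<in> A j"
    proof -
      fix j assume j: "j<n"
      then have "n - 1 - j < n" by simp
      then have "x (n - 1 - j) \<in> A (n - 1 - (n - 1 - j))" using hx by (metis PiE_mem lessThan_iff)
      then show "rv n x j \<in> A j" using j by (simp add: rv_def)
    qed
    then have "rv n x \<in> Pi\<^sub>E {..<n} A" by (auto simp: PiE_iff rv_def extensional_def)
    moreover have "x \<in> space (Mq n)"
    proof -
      have "\<And>i. i<n \<Longrightarrow> x i \<in> {0..}" using hx AS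
        by (metis PiE_mem lessThan_iff subsetD diff_less_Suc less_le_trans Suc_pred not_less_zero gr0I diff_Suc_1 le_add_diff_inverse2)
      then show ?thesis using hx by (simp add: space_Mq PiE_iff)
    qed
    ultimately show "x \<in> rv n -` Pi\<^sub>E {..<n} A \<inter> space (Mq n)" by simp
  qed
  have "emeasure (distr (Mq n) (Pi\<^sub>M {..<n} (\<lambda>_. Rp)) (rv n)) (Pi\<^sub>E {..<n} A)
     = emeasure (Mq n) (rv n -` Pi\<^sub>E {..<n} A \<inter> space (Mq n))"
    using meas_rv[of n] A by (intro emeasure_distr) (auto simp: Mq_def)
  also have "\<dots> = emeasure (Mq n) (Pi\<^sub>E {..<n} (\<lambda>j. A (n - 1 - j)))"
    by (simp only: *)
  also have "\<dots> = (\<Prod>j<n. emeasure Rp (A (n - 1 - j)))"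
    using A unfolding Mq_def by (subst PS.emeasure_PiM) auto
  also have "\<dots> = (\<Prod>i<n. emeasure Rp (A i))"
    by (rule prod.reindex_bij_witness[where i="\<lambda>j. n - 1 - j" and j="\<lambda>j. n - 1 - j"]) auto
  finally show "emeasure (distr (Mq n) (Pi\<^sub>M {..<n} (\<lambda>_. Rp)) (rv n)) (Pi\<^sub>E {..<n} A) =
         (\<Prod>i\<in>{..<n}. emeasure Rp (A i))" by simp
qed simp

lemma distr_rv: "distr (Mq n) (Mq n) (rv n) = Mq n"
  using distr_rv0[of n] by (simp add: Mq_def)

lemma nn_rv:
  assumes f: "f \<in> borel_measurable (Mq n)"
  shows "(\<integral>\<^sup>+x. f x \<partial>Mq n) = (\<integral>\<^sup>+x. f (rv n x) \<partial>Mq n)"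
proof -
  have "(\<integral>\<^sup>+x. f x \<partial>Mq n) = (\<integral>\<^sup>+x. f x \<partial>distr (Mq n) (Mq n) (rv n))" by (simp add: distr_rv)
  also have "\<dots> = (\<integral>\<^sup>+x. f (rv n x) \<partial>Mq n)" using f meas_rv by (simp add: nn_integral_distr)
  finally show ?thesis .
qed

lemma nn_jn:
  assumes f: "f \<in> borel_measurable (Mq (m+n))"
  shows "(\<integral>\<^sup>+x. f x \<partial>Mq (m+n)) = (\<integral>\<^sup>+u. \<integral>\<^sup>+v. f (jn m n (u,v)) \<partial>Mq n \<partial>Mq m)"
proof -
  interpret P: pair_sigma_finite "Mq m" "Mq n" by (rule psf)
  have fm: "(\<lambda>x. f (jn m n x)) \<in> borel_measurable (Mq m \<Otimes>\<^sub>M Mq n)"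
    using measurable_comp[OF meas_jn f] by (simp add: comp_def)
  have "(\<integral>\<^sup>+x. f x \<partial>Mq (m+n)) = (\<integral>\<^sup>+x. f x \<partial>distr (Mq m \<Otimes>\<^sub>M Mq n) (Mq (m+n)) (jn m n))" by (simp add: distr_jn)
  also have "\<dots> = (\<integral>\<^sup>+x. f (jn m n x) \<partial>(Mq m \<Otimes>\<^sub>M Mq n))" using f meas_jn by (simp add: nn_integral_distr)
  also have "\<dots> = (\<integral>\<^sup>+u. \<integral>\<^sup>+v. f (jn m n (u,v)) \<partial>Mq n \<partial>Mq m)"
    using P.M2.nn_integral_fst[OF fm] by simp
  finally show ?thesis .
qed

lemma nn_jn':
  assumes f: "f \<in> borel_measurable (Mq (m+n))"
  shows "(\<integral>\<^sup>+x. f x \<partial>Mq (m+n)) = (\<integral>\<^sup>+v. \<integral>\<^sup>+u. f (jn m n (u,v)) \<partial>Mq m \<partial>Mq n)"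
proof -
  interpret P: pair_sigma_finite "Mq m" "Mq n" by (rule psf)
  have fm: "(\<lambda>x. f (jn m n x)) \<in> borel_measurable (Mq m \<Otimes>\<^sub>M Mq n)"
    using measurable_comp[OF meas_jn f] by (simp add: comp_def)
  show ?thesis using nn_jn[OF f] P.Fubini[OF fm] by simp
qed

lemma int_jn:
  assumes f: "integrable (Mq (m+n)) (f :: _ \<Rightarrow> real)"
  shows "(\<integral>x. f x \<partial>Mq (m+n)) = (\<integral>u. \<integral>v. f (jn m n (u,v)) \<partial>Mq n \<partial>Mq m)"
proof -
  interpret P: pair_sigma_finite "Mq m" "Mq n" by (rule psf)
  have fb: "f \<in> borel_measurable (Mq (m+n))" using f by auto
  have fi: "integrable (Mq m \<Otimes>\<^sub>M Mq n) (\<lambda>x. f (jn m n x))"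
    using f integrable_distr_eq[OF meas_jn fb] distr_jn by simp
  have "(\<integral>x. f x \<partial>Mq (m+n)) = (\<integral>x. f x \<partial>distr (Mq m \<Otimes>\<^sub>M Mq n) (Mq (m+n)) (jn m n))" by (simp add: distr_jn)
  also have "\<dots> = (\<integral>x. f (jn m n x) \<partial>(Mq m \<Otimes>\<^sub>M Mq n))" using fb meas_jn by (simp add: integral_distr)
  also have "\<dots> = (\<integral>u. \<integral>v. f (jn m n (u,v)) \<partial>Mq n \<partial>Mq m)"
    using P.integral_fst'[OF fi] by simp
  finally show ?thesis .
qed



definition argA :: "nat \<Rightarrow> nat \<Rightarrow> (nat \<Rightarrow> real) \<Rightarrow> (nat \<Rightarrow> real) \<Rightarrow> nat \<Rightarrow> real" where
  "argA m s t x = (\<lambda>i. if i < m - s then t i else if i < m then x (i - (m - s)) else undefined)"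

definition argB :: "nat \<Rightarrow> nat \<Rightarrow> nat \<Rightarrow> (nat \<Rightarrow> real) \<Rightarrow> (nat \<Rightarrow> real) \<Rightarrow> nat \<Rightarrow> real" where
  "argB m k s t x = (\<lambda>i. if i < s then x (s - 1 - i) else if i < k then t (m - s + (i - s)) else undefined)"

lemma contr_eq: "s \<noteq> 0 \<Longrightarrow> contr m k s a b t = (\<integral>x. a (argA m s t x) * b (argB m k s t x) \<partial>Mq s)"
  unfolding contr_def argA_def argB_def by simp

definition cnE :: "nat \<Rightarrow> nat \<Rightarrow> nat \<Rightarrow> ((nat \<Rightarrow> real) \<Rightarrow> ennreal) \<Rightarrow> ((nat \<Rightarrow> real) \<Rightarrow> ennreal) \<Rightarrow> (nat \<Rightarrow> real) \<Rightarrow> ennreal" where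
  "cnE m k s a b t = (\<integral>\<^sup>+x. a (argA m s t x) * b (argB m k s t x) \<partial>Mq s)"

lemma meas_argA: "m - s \<le> n \<Longrightarrow> (\<lambda>p. argA m s (fst p) (snd p)) \<in> measurable (Mq n \<Otimes>\<^sub>M Mq s) (Mq m)"
proof (rule meas_Mq)
  fix i assume "m - s \<le> n" "i < m"
  then show "(\<lambda>p. argA m s (fst p) (snd p) i) \<in> measurable (Mq n \<Otimes>\<^sub>M Mq s) Rp"
    unfolding argA_def
    by (auto intro!: meas_If_const measurable_compose[OF measurable_fst meas_coord]
        measurable_compose[OF measurable_snd meas_coord])
qed (auto simp: argA_def)

lemma meas_argB: "m - s + (k - s) \<le> n \<Longrightarrow> s \<le> k \<Longrightarrow> (\<lambda>p. argB m k s (fst p) (snd p)) \<in> measurable (Mq n \<Otimes>\<^sub>M Mq s) (Mq k)"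
proof (rule meas_Mq)
  fix i assume "m - s + (k - s) \<le> n" "s \<le> k" "i < k"
  then show "(\<lambda>p. argB m k s (fst p) (snd p) i) \<in> measurable (Mq n \<Otimes>\<^sub>M Mq s) Rp"
    unfolding argB_def
    by (auto intro!: meas_If_const measurable_compose[OF measurable_fst meas_coord]
        measurable_compose[OF measurable_snd meas_coord])
qed (auto simp: argB_def)

lemma meas_contr:
  assumes a: "a \<in> borel_measurable (Mq m)" and b: "b \<in> borel_measurable (Mq k)"
    and s: "1 \<le> s" "s \<le> m" "s \<le> k"
  shows "contr m k s a b \<in> borel_measurable (Mq (m + k - 2 * s))"
proof -
  interpret S: sigma_finite_measure "Mq s" by (rule sf_Mq)
  have hA: "m - s \<le> m + k - 2 * s" "m - s + (k - s) \<le> m + k - 2 * s" using s by auto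
  have hB: "m - s + (k - s) \<le> m + k - 2 * s" using s by auto
  have 1: "(\<lambda>p. a (argA m s (fst p) (snd p))) \<in> borel_measurable (Mq (m + k - 2 * s) \<Otimes>\<^sub>M Mq s)"
    using measurable_comp[OF meas_argA[OF hA(1)] a] by (simp add: comp_def)
  have 2: "(\<lambda>p. b (argB m k s (fst p) (snd p))) \<in> borel_measurable (Mq (m + k - 2 * s) \<Otimes>\<^sub>M Mq s)"
    using measurable_comp[OF meas_argB[OF hB s(3)] b] by (simp add: comp_def)
  have "(\<lambda>t. \<integral>x. a (argA m s t x) * b (argB m k s t x) \<partial>Mq s) \<in> borel_measurable (Mq (m + k - 2 * s))"
    by (rule S.borel_measurable_lebesgue_integral) (use 1 2 in \<open>simp add: split_beta\<close>)
  moreover have "contr m k s a b = (\<lambda>t. \<integral>x. a (argA m s t x) * b (argB m k s t x) \<partial>Mq s)"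
    using s by (intro ext contr_eq) auto
  ultimately show ?thesis by simp
qed

lemma meas_cnE:
  assumes a: "a \<in> borel_measurable (Mq m)" and b: "b \<in> borel_measurable (Mq k)"
    and s: "s \<le> m" "s \<le> k"
  shows "cnE m k s a b \<in> borel_measurable (Mq (m + k - 2 * s))"
proof -
  interpret S: sigma_finite_measure "Mq s" by (rule sf_Mq)
  have hA: "m - s \<le> m + k - 2 * s" "m - s + (k - s) \<le> m + k - 2 * s" using s by auto
  have hB: "m - s + (k - s) \<le> m + k - 2 * s" using s by auto
  have 1: "(\<lambda>p. a (argA m s (fst p) (snd p))) \<in> borel_measurable (Mq (m + k - 2 * s) \<Otimes>\<^sub>M Mq s)"
    using measurable_comp[OF meas_argA[OF hA(1)] a] by (simp add: comp_def)
  have 2: "(\<lambda>p. b (argB m k s (fst p) (snd p))) \<in> borel_measurable (Mq (m + k - 2 * s) \<Otimes>\<^sub>M Mq s)"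
    using measurable_comp[OF meas_argB[OF hB s(2)] b] by (simp add: comp_def)
  show ?thesis unfolding cnE_def
    by (rule S.borel_measurable_nn_integral) (use 1 2 in \<open>simp add: split_beta\<close>)
qed

lemma argA_jn: "s \<le> m \<Longrightarrow> argA m s (jn (m - s) l (u, v)) x = jn (m - s) s (u, x)"
  by (rule ext) (auto simp: argA_def jn_def)

lemma argB_jn: "s \<le> m \<Longrightarrow> s \<le> k \<Longrightarrow> argB m k s (jn (m - s) (k - s) (u, v)) x = jn s (k - s) (rv s x, v)"
  by (rule ext) (auto simp: argB_def jn_def rv_def)



lemma meas_jn1: "u \<in> space (Mq m) \<Longrightarrow> (\<lambda>x. jn m n (u,x)) \<in> measurable (Mq n) (Mq (m+n))"
  using measurable_comp[OF measurable_Pair1'[of u "Mq m" "Mq n"] meas_jn[of m n]] by (simp add: comp_def)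

lemma meas_jn2: "v \<in> space (Mq n) \<Longrightarrow> (\<lambda>x. jn m n (x,v)) \<in> measurable (Mq m) (Mq (m+n))"
proof -
  assume v: "v \<in> space (Mq n)"
  have "(\<lambda>x. (x, v)) \<in> measurable (Mq m) (Mq m \<Otimes>\<^sub>M Mq n)"
    using v by (intro measurable_Pair) auto
  from measurable_comp[OF this meas_jn[of m n]] show ?thesis by (simp add: comp_def)
qed

lemma cnE_L2:
  assumes a: "a \<in> borel_measurable (Mq m)" and b: "b \<in> borel_measurable (Mq k)"
    and s: "s \<le> m" "s \<le> k"
  shows "(\<integral>\<^sup>+t. (cnE m k s a b t)^2 \<partial>Mq (m + k - 2 * s)) \<le> (\<integral>\<^sup>+x. (a x)^2 \<partial>Mq m) * (\<integral>\<^sup>+x. (b x)^2 \<partial>Mq k)"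
proof -
  define m' where "m' = m - s"
  define k' where "k' = k - s"
  have n: "m + k - 2 * s = m' + k'" and mm: "m = m' + s" and kk: "k = s + k'"
    using s by (auto simp: m'_def k'_def)
  have cm: "cnE m k s a b \<in> borel_measurable (Mq (m' + k'))"
    using meas_cnE[OF a b s] n by simp
  have am: "a \<in> borel_measurable (Mq (m' + s))" using a mm by simp
  have bm: "b \<in> borel_measurable (Mq (s + k'))" using b kk by simp
  define \<alpha> where "\<alpha> u = (\<integral>\<^sup>+x. (a (jn m' s (u,x)))^2 \<partial>Mq s)" for u
  define \<beta> where "\<beta> v = (\<integral>\<^sup>+x. (b (jn s k' (x,v)))^2 \<partial>Mq s)" for v
  interpret S: sigma_finite_measure "Mq s" by (rule sf_Mq)
  have \<alpha>m: "\<alpha> \<in> borel_measurable (Mq m')"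
    unfolding \<alpha>_def
    using measurable_comp[OF meas_jn am] by (intro S.borel_measurable_nn_integral) (simp add: comp_def split_beta')
  have \<beta>m: "\<beta> \<in> borel_measurable (Mq k')"
  proof -
    have "(\<lambda>p. (b (jn s k' (snd p, fst p)))^2) \<in> borel_measurable (Mq k' \<Otimes>\<^sub>M Mq s)"
      using measurable_comp[OF measurable_comp[OF measurable_pair_swap' meas_jn] bm]
      by (simp add: comp_def split_beta')
    then show ?thesis unfolding \<beta>_def by (intro S.borel_measurable_nn_integral) (simp add: split_beta')
  qed
  have pt: "(cnE m k s a b (jn m' k' (u,v)))^2 \<le> \<alpha> u * \<beta> v"
    if u: "u \<in> space (Mq m')" and v: "v \<in> space (Mq k')" for u v
  proof -
    have eq: "cnE m k s a b (jn m' k' (u,v)) = (\<integral>\<^sup>+x. a (jn m' s (u,x)) * b (jn s k' (rv s x, v)) \<partial>Mq s)"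
      unfolding cnE_def m'_def k'_def using s by (simp add: argA_jn argB_jn)
    have "(cnE m k s a b (jn m' k' (u,v)))^2 = (\<integral>\<^sup>+x. a (jn m' s (u,x)) * b (jn s k' (rv s x, v)) \<partial>Mq s)^2"
      by (simp only: eq)
    also have "\<dots> \<le> (\<integral>\<^sup>+x. (a (jn m' s (u,x)))^2 \<partial>Mq s) * (\<integral>\<^sup>+x. (b (jn s k' (rv s x, v)))^2 \<partial>Mq s)"
    proof (rule Cauchy_Schwarz_nn_integral)
      show "(\<lambda>x. a (jn m' s (u, x))) \<in> borel_measurable (Mq s)"
        using measurable_comp[OF meas_jn1[OF u] am] by (simp add: comp_def)
      show "(\<lambda>x. b (jn s k' (rv s x, v))) \<in> borel_measurable (Mq s)"
        using measurable_comp[OF meas_rv measurable_comp[OF meas_jn2[OF v] bm]] by (simp add: comp_def)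
    qed
    also have "(\<integral>\<^sup>+x. (b (jn s k' (rv s x, v)))^2 \<partial>Mq s) = \<beta> v"
      unfolding \<beta>_def
      using measurable_comp[OF meas_jn2[OF v] bm]
      by (intro nn_rv[symmetric]) (simp add: comp_def)
    finally show ?thesis by (simp add: \<alpha>_def)
  qed
  have "(\<integral>\<^sup>+t. (cnE m k s a b t)^2 \<partial>Mq (m + k - 2 * s))
      = (\<integral>\<^sup>+u. \<integral>\<^sup>+v. (cnE m k s a b (jn m' k' (u,v)))^2 \<partial>Mq k' \<partial>Mq m')"
    unfolding n using cm by (intro nn_jn) simp
  also have "\<dots> \<le> (\<integral>\<^sup>+u. \<integral>\<^sup>+v. \<alpha> u * \<beta> v \<partial>Mq k' \<partial>Mq m')"
    by (intro nn_integral_mono pt)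
  also have "\<dots> = (\<integral>\<^sup>+u. \<alpha> u * (\<integral>\<^sup>+v. \<beta> v \<partial>Mq k') \<partial>Mq m')"
    using \<beta>m by (simp add: nn_integral_cmult)
  also have "\<dots> = (\<integral>\<^sup>+u. \<alpha> u \<partial>Mq m') * (\<integral>\<^sup>+v. \<beta> v \<partial>Mq k')"
    using \<alpha>m by (simp add: nn_integral_multc)
  also have "(\<integral>\<^sup>+u. \<alpha> u \<partial>Mq m') = (\<integral>\<^sup>+x. (a x)^2 \<partial>Mq m)"
    unfolding \<alpha>_def mm using am by (intro nn_jn[symmetric]) simp
  also have "(\<integral>\<^sup>+v. \<beta> v \<partial>Mq k') = (\<integral>\<^sup>+x. (b x)^2 \<partial>Mq k)"
    unfolding \<beta>_def kk using bm by (intro nn_jn'[symmetric]) simp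
  finally show ?thesis .
qed



lemma sq_enn: "ennreal (x^2) = (ennreal \<bar>x\<bar>)^2"
proof -
  have "(ennreal \<bar>x\<bar>)^2 = ennreal (\<bar>x\<bar>^2)" by (rule ennreal_power) simp
  then show ?thesis by simp
qed

lemma contr_pt:
  assumes "s \<noteq> 0"
  shows "ennreal ((contr m k s a b t)^2) \<le> (cnE m k s (\<lambda>x. ennreal \<bar>a x\<bar>) (\<lambda>x. ennreal \<bar>b x\<bar>) t)^2"
proof -
  let ?F = "\<lambda>x. a (argA m s t x) * b (argB m k s t x)"
  have c: "contr m k s a b t = (\<integral>x. ?F x \<partial>Mq s)" using assms by (rule contr_eq)
  have cn: "cnE m k s (\<lambda>x. ennreal \<bar>a x\<bar>) (\<lambda>x. ennreal \<bar>b x\<bar>) t = (\<integral>\<^sup>+x. ennreal (norm (?F x)) \<partial>Mq s)"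
    unfolding cnE_def by (intro nn_integral_cong) (simp add: abs_mult ennreal_mult)
  have "ennreal \<bar>\<integral>x. ?F x \<partial>Mq s\<bar> \<le> (\<integral>\<^sup>+x. ennreal (norm (?F x)) \<partial>Mq s)"
  proof (cases "integrable (Mq s) ?F")
    case True then show ?thesis using integral_norm_bound_ennreal[OF True] by simp
  next
    case False then show ?thesis by (simp add: not_integrable_integral_eq)
  qed
  then have "(ennreal \<bar>\<integral>x. ?F x \<partial>Mq s\<bar>)^2 \<le> (\<integral>\<^sup>+x. ennreal (norm (?F x)) \<partial>Mq s)^2"
    by (rule power_mono) simp
  moreover have "ennreal ((\<integral>x. ?F x \<partial>Mq s)^2) = (ennreal \<bar>\<integral>x. ?F x \<partial>Mq s\<bar>)^2"
    by (rule sq_enn)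
  ultimately show ?thesis using c cn by simp
qed

lemma contr_L2:
  assumes a: "a \<in> borel_measurable (Mq m)" and b: "b \<in> borel_measurable (Mq k)"
    and s: "1 \<le> s" "s \<le> m" "s \<le> k"
  shows "(\<integral>\<^sup>+t. ennreal ((contr m k s a b t)^2) \<partial>Mq (m + k - 2 * s))
     \<le> (\<integral>\<^sup>+x. ennreal ((a x)^2) \<partial>Mq m) * (\<integral>\<^sup>+x. ennreal ((b x)^2) \<partial>Mq k)"
proof -
  have "(\<integral>\<^sup>+t. ennreal ((contr m k s a b t)^2) \<partial>Mq (m + k - 2 * s))
     \<le> (\<integral>\<^sup>+t. (cnE m k s (\<lambda>x. ennreal \<bar>a x\<bar>) (\<lambda>x. ennreal \<bar>b x\<bar>) t)^2 \<partial>Mq (m + k - 2 * s))"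
    using s by (intro nn_integral_mono contr_pt) auto
  also have "\<dots> \<le> (\<integral>\<^sup>+x. (ennreal \<bar>a x\<bar>)^2 \<partial>Mq m) * (\<integral>\<^sup>+x. (ennreal \<bar>b x\<bar>)^2 \<partial>Mq k)"
    using a b s by (intro cnE_L2) auto
  also have "\<dots> = (\<integral>\<^sup>+x. ennreal ((a x)^2) \<partial>Mq m) * (\<integral>\<^sup>+x. ennreal ((b x)^2) \<partial>Mq k)"
    by (simp add: sq_enn)
  finally show ?thesis .
qed



definition gp :: "nat \<Rightarrow> (nat \<Rightarrow> real) \<Rightarrow> nat \<Rightarrow> real" where
  "gp p u = (\<lambda>i. if i < p then u i else undefined)"
definition fp :: "nat \<Rightarrow> nat \<Rightarrow> (nat \<Rightarrow> real) \<Rightarrow> nat \<Rightarrow> real" where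
  "fp p c u = (\<lambda>i. if i < c then u (p + i) else undefined)"

lemma gp_jn: "gp (a+rr) (argA (a+rr+c) (rr+c) t (jn rr c (y,z))) = argA (a+rr) rr t y"
  by (rule ext) (auto simp: gp_def argA_def jn_def)

lemma fp_jn: "z \<in> extensional {..<c} \<Longrightarrow> fp (a+rr) c (argA (a+rr+c) (rr+c) t (jn rr c (y,z))) = z"
  by (rule ext) (auto simp: fp_def argA_def jn_def extensional_def)

lemma argB_jn2: "rr \<le> d \<Longrightarrow> argB (a+rr+c) (c+d) (rr+c) t (jn rr c (y,z)) = argB c (c+d) c (argB (a+rr) d rr t y) z"
  by (rule ext) (auto simp: argB_def jn_def add.commute)

lemma argA_cc: "z \<in> extensional {..<c} \<Longrightarrow> argA c c v z = z"
  by (rule ext) (auto simp: argA_def extensional_def)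

lemma meas_gp: "p \<le> n \<Longrightarrow> gp p \<in> measurable (Mq n) (Mq p)"
  by (rule meas_Mq) (auto simp: gp_def intro!: meas_coord)

lemma meas_fp: "p + c \<le> n \<Longrightarrow> fp p c \<in> measurable (Mq n) (Mq c)"
  by (rule meas_Mq) (auto simp: fp_def intro!: meas_coord)

lemma meas_argA1: "m - s \<le> n \<Longrightarrow> t \<in> space (Mq n) \<Longrightarrow> (\<lambda>x. argA m s t x) \<in> measurable (Mq s) (Mq m)"
  using measurable_comp[OF measurable_Pair1'[of t "Mq n" "Mq s"] meas_argA[of m s n]] by (simp add: comp_def)

lemma meas_argB1: "m - s + (k - s) \<le> n \<Longrightarrow> s \<le> k \<Longrightarrow> t \<in> space (Mq n) \<Longrightarrow> (\<lambda>x. argB m k s t x) \<in> measurable (Mq s) (Mq k)"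
  using measurable_comp[OF measurable_Pair1'[of t "Mq n" "Mq s"] meas_argB[of m s k n]] by (simp add: comp_def)



lemma core:
  fixes g F f :: "(nat \<Rightarrow> real) \<Rightarrow> real" and a rr c d :: nat
  assumes gm: "g \<in> borel_measurable (Mq (a+rr))" and Fm: "F \<in> borel_measurable (Mq c)"
    and fm: "f \<in> borel_measurable (Mq (c+d))"
    and gL: "(\<integral>\<^sup>+x. ennreal ((g x)^2) \<partial>Mq (a+rr)) \<noteq> \<infinity>"
    and FL: "(\<integral>\<^sup>+x. ennreal ((F x)^2) \<partial>Mq c) \<noteq> \<infinity>"
    and fL: "(\<integral>\<^sup>+x. ennreal ((f x)^2) \<partial>Mq (c+d)) \<noteq> \<infinity>"
    and rr: "1 \<le> rr" "rr \<le> d" and c: "1 \<le> c"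
  shows "AE t in Mq (a + (d - rr)).
    contr (a+rr+c) (c+d) (rr+c) (\<lambda>u. g (gp (a+rr) u) * F (fp (a+rr) c u)) f t
      = contr (a+rr) d rr g (contr c (c+d) c F f) t"
proof -
  define H where "H = cnE c (c+d) c (\<lambda>x. ennreal \<bar>F x\<bar>) (\<lambda>x. ennreal \<bar>f x\<bar>)"
  define K where "K = cnE (a+rr) d rr (\<lambda>x. ennreal \<bar>g x\<bar>) H"
  have Hm: "H \<in> borel_measurable (Mq d)"
    using meas_cnE[of "\<lambda>x. ennreal \<bar>F x\<bar>" c "\<lambda>x. ennreal \<bar>f x\<bar>" "c+d" c] Fm fm
    unfolding H_def by simp
  have Km: "K \<in> borel_measurable (Mq (a + (d - rr)))"
    using meas_cnE[of "\<lambda>x. ennreal \<bar>g x\<bar>" "a+rr" H d rr] gm Hm rr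
    unfolding K_def by (simp add: add.commute)
  have HL: "(\<integral>\<^sup>+t. (H t)^2 \<partial>Mq d) \<le> (\<integral>\<^sup>+x. (ennreal \<bar>F x\<bar>)^2 \<partial>Mq c) * (\<integral>\<^sup>+x. (ennreal \<bar>f x\<bar>)^2 \<partial>Mq (c+d))"
    using cnE_L2[of "\<lambda>x. ennreal \<bar>F x\<bar>" c "\<lambda>x. ennreal \<bar>f x\<bar>" "c+d" c] Fm fm
    unfolding H_def by simp
  have KL: "(\<integral>\<^sup>+t. (K t)^2 \<partial>Mq (a + (d - rr))) \<le> (\<integral>\<^sup>+x. (ennreal \<bar>g x\<bar>)^2 \<partial>Mq (a+rr)) * (\<integral>\<^sup>+t. (H t)^2 \<partial>Mq d)"
    using cnE_L2[of "\<lambda>x. ennreal \<bar>g x\<bar>" "a+rr" H d rr] gm Hm rr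
    unfolding K_def by (simp add: add.commute)
  have fin: "(\<integral>\<^sup>+t. (K t)^2 \<partial>Mq (a + (d - rr))) \<noteq> \<infinity>"
  proof -
    have "(\<integral>\<^sup>+x. (ennreal \<bar>F x\<bar>)^2 \<partial>Mq c) * (\<integral>\<^sup>+x. (ennreal \<bar>f x\<bar>)^2 \<partial>Mq (c+d)) < \<infinity>"
      using FL fL by (simp add: sq_enn[symmetric] ennreal_mult_less_top less_top)
    then have "(\<integral>\<^sup>+t. (H t)^2 \<partial>Mq d) < \<infinity>" using HL by (meson le_less_trans)
    then have "(\<integral>\<^sup>+x. (ennreal \<bar>g x\<bar>)^2 \<partial>Mq (a+rr)) * (\<integral>\<^sup>+t. (H t)^2 \<partial>Mq d) < \<infinity>"
      using gL by (simp add: sq_enn[symmetric] ennreal_mult_less_top less_top)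
    then have "(\<integral>\<^sup>+t. (K t)^2 \<partial>Mq (a + (d - rr))) < \<infinity>" by (rule le_less_trans[OF KL])
    then show ?thesis by simp
  qed
  have "AE t in Mq (a + (d - rr)). (K t)^2 \<noteq> \<infinity>"
    using Km fin by (intro nn_integral_noteq_infinite) auto
  then have AEK: "AE t in Mq (a + (d - rr)). K t \<noteq> \<infinity>"
    by eventually_elim (auto simp: power2_eq_square ennreal_mult_eq_top_iff)
  show ?thesis
  proof (rule AE_mp[OF AEK], rule AE_I2, rule impI)
    fix t assume t: "t \<in> space (Mq (a + (d - rr)))" and Kt: "K t \<noteq> \<infinity>"
    define G where "G u = g (gp (a+rr) u) * F (fp (a+rr) c u)" for u
    define \<Phi> where "\<Phi> x = G (argA (a+rr+c) (rr+c) t x) * f (argB (a+rr+c) (c+d) (rr+c) t x)" for x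
    define V where "V y = argB (a+rr) d rr t y" for y
    have Gm: "G \<in> borel_measurable (Mq (a+rr+c))"
    proof -
      have "(\<lambda>u. g (gp (a+rr) u)) \<in> borel_measurable (Mq (a+rr+c))"
        using measurable_comp[OF meas_gp gm, of "a+rr+c"] by (simp add: comp_def)
      moreover have "(\<lambda>u. F (fp (a+rr) c u)) \<in> borel_measurable (Mq (a+rr+c))"
        using measurable_comp[OF meas_fp Fm, of "a+rr" "a+rr+c"] by (simp add: comp_def)
      ultimately show ?thesis unfolding G_def[abs_def] by (rule borel_measurable_times)
    qed
    have \<Phi>m: "\<Phi> \<in> borel_measurable (Mq (rr+c))"
    proof -
      have 1: "(\<lambda>x. G (argA (a+rr+c) (rr+c) t x)) \<in> borel_measurable (Mq (rr+c))"
        using measurable_comp[OF meas_argA1[of "a+rr+c" "rr+c" "a + (d - rr)" t] Gm] t by (simp add: comp_def)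
      have 2: "(\<lambda>x. f (argB (a+rr+c) (c+d) (rr+c) t x)) \<in> borel_measurable (Mq (rr+c))"
        using measurable_comp[OF meas_argB1[of "a+rr+c" "rr+c" "c+d" "a + (d - rr)" t] fm] t rr by (simp add: comp_def)
      show ?thesis unfolding \<Phi>_def[abs_def] using 1 2 by (rule borel_measurable_times)
    qed
    have Vsp: "V y \<in> space (Mq d)" if y: "y \<in> space (Mq rr)" for y
      using measurable_space[OF meas_argB1[of "a+rr" rr d "a + (d - rr)" t] y] t rr unfolding V_def by simp
    have zf: "(\<lambda>z. f (argB c (c+d) c v z)) \<in> borel_measurable (Mq c)" if v: "v \<in> space (Mq d)" for v
      using measurable_comp[OF meas_argB1[of c c "c+d" d v] fm] v by (simp add: comp_def)
    have gy: "(\<lambda>y. g (argA (a+rr) rr t y)) \<in> borel_measurable (Mq rr)"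
      using measurable_comp[OF meas_argA1[of "a+rr" rr "a + (d - rr)" t] gm] t by (simp add: comp_def)
    have jeq: "\<Phi> (jn rr c (y,z)) = g (argA (a+rr) rr t y) * (F z * f (argB c (c+d) c (V y) z))"
      if z: "z \<in> space (Mq c)" for y z
    proof -
      have ze: "z \<in> extensional {..<c}" using z by (simp add: space_Mq PiE_iff)
      show ?thesis unfolding \<Phi>_def G_def V_def
        using gp_jn[of a rr c t y z] fp_jn[OF ze, of a rr t y] argB_jn2[OF rr(2), of a c t y z]
        by (simp add: add.commute add.left_commute)
    qed
    have inner_int: "(\<integral>z. F (argA c c v z) * f (argB c (c+d) c v z) \<partial>Mq c) = (\<integral>z. F z * f (argB c (c+d) c v z) \<partial>Mq c)" for v
      by (rule Bochner_Integration.integral_cong) (auto simp: argA_cc space_Mq PiE_iff)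
    have inner_nn: "(\<integral>\<^sup>+z. ennreal \<bar>F (argA c c v z)\<bar> * ennreal \<bar>f (argB c (c+d) c v z)\<bar> \<partial>Mq c) = (\<integral>\<^sup>+z. ennreal \<bar>F z\<bar> * ennreal \<bar>f (argB c (c+d) c v z)\<bar> \<partial>Mq c)" for v
      by (intro nn_integral_cong) (simp add: argA_cc space_Mq PiE_iff)
    have "K t = (\<integral>\<^sup>+y. ennreal \<bar>g (argA (a+rr) rr t y)\<bar> * (\<integral>\<^sup>+z. ennreal \<bar>F z\<bar> * ennreal \<bar>f (argB c (c+d) c (V y) z)\<bar> \<partial>Mq c) \<partial>Mq rr)"
      unfolding K_def H_def cnE_def V_def inner_nn[unfolded cnE_def] ..
    also have "\<dots> = (\<integral>\<^sup>+y. \<integral>\<^sup>+z. ennreal (norm (\<Phi> (jn rr c (y,z)))) \<partial>Mq c \<partial>Mq rr)"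
    proof (intro nn_integral_cong)
      fix y assume y: "y \<in> space (Mq rr)"
      have "ennreal \<bar>g (argA (a+rr) rr t y)\<bar> * (\<integral>\<^sup>+z. ennreal \<bar>F z\<bar> * ennreal \<bar>f (argB c (c+d) c (V y) z)\<bar> \<partial>Mq c)
        = (\<integral>\<^sup>+z. ennreal \<bar>g (argA (a+rr) rr t y)\<bar> * (ennreal \<bar>F z\<bar> * ennreal \<bar>f (argB c (c+d) c (V y) z)\<bar>) \<partial>Mq c)"
        using Fm zf[OF Vsp[OF y]] by (intro nn_integral_cmult[symmetric]) auto
      also have "\<dots> = (\<integral>\<^sup>+z. ennreal (norm (\<Phi> (jn rr c (y,z)))) \<partial>Mq c)"
        by (intro nn_integral_cong) (simp add: jeq abs_mult ennreal_mult mult.assoc)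
      finally show "ennreal \<bar>g (argA (a+rr) rr t y)\<bar> * (\<integral>\<^sup>+z. ennreal \<bar>F z\<bar> * ennreal \<bar>f (argB c (c+d) c (V y) z)\<bar> \<partial>Mq c)
        = (\<integral>\<^sup>+z. ennreal (norm (\<Phi> (jn rr c (y,z)))) \<partial>Mq c)" .
    qed
    also have "\<dots> = (\<integral>\<^sup>+x. ennreal (norm (\<Phi> x)) \<partial>Mq (rr+c))"
      using \<Phi>m by (intro nn_jn[symmetric]) auto
    finally have Keq: "K t = (\<integral>\<^sup>+x. ennreal (norm (\<Phi> x)) \<partial>Mq (rr+c))" .
    have \<Phi>i: "integrable (Mq (rr+c)) \<Phi>"
      using \<Phi>m Kt Keq by (intro integrableI_bounded) (auto simp: less_top)
    have "contr (a+rr+c) (c+d) (rr+c) G f t = (\<integral>x. \<Phi> x \<partial>Mq (rr+c))"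
      unfolding \<Phi>_def using c by (intro contr_eq) auto
    also have "\<dots> = (\<integral>y. \<integral>z. \<Phi> (jn rr c (y,z)) \<partial>Mq c \<partial>Mq rr)"
      using \<Phi>i by (rule int_jn)
    also have "\<dots> = (\<integral>y. g (argA (a+rr) rr t y) * (\<integral>z. F z * f (argB c (c+d) c (V y) z) \<partial>Mq c) \<partial>Mq rr)"
    proof (rule Bochner_Integration.integral_cong[OF refl])
      fix y
      have "(\<integral>z. \<Phi> (jn rr c (y,z)) \<partial>Mq c) = (\<integral>z. g (argA (a+rr) rr t y) * (F z * f (argB c (c+d) c (V y) z)) \<partial>Mq c)"
        by (rule Bochner_Integration.integral_cong[OF refl]) (simp add: jeq)
      then show "(\<integral>z. \<Phi> (jn rr c (y,z)) \<partial>Mq c) = g (argA (a+rr) rr t y) * (\<integral>z. F z * f (argB c (c+d) c (V y) z) \<partial>Mq c)"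
        by simp
    qed
    also have "\<dots> = contr (a+rr) d rr g (contr c (c+d) c F f) t"
      using rr c by (simp add: contr_eq inner_int V_def)
    finally show "contr (a+rr+c) (c+d) (rr+c) (\<lambda>u. g (gp (a+rr) u) * F (fp (a+rr) c u)) f t
      = contr (a+rr) d rr g (contr c (c+d) c F f) t"
      unfolding G_def[abs_def] .
  qed
qed



lemma Gsplit:
  assumes "1 \<le> r" "r \<le> q"
  shows "contr (p+q) q r (tensor p q g f) f = (\<lambda>u. g (gp p u) * contr q q r f f (fp p (2*q-2*r) u))"
proof (rule ext)
  fix u
  have A: "(\<lambda>i. if i < p then argA (p+q) r u y i else undefined) = gp p u" for y
    using assms by (intro ext) (auto simp: argA_def gp_def)
  have B: "(\<lambda>i. if i < q then argA (p+q) r u y (p+i) else undefined) = argA q r (fp p (2*q-2*r) u) y" for y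
    using assms by (intro ext) (auto simp: argA_def fp_def)
  have C: "argB (p+q) q r u y = argB q q r (fp p (2*q-2*r) u) y" for y
    using assms by (intro ext) (auto simp: argB_def fp_def add.assoc)
  have "contr (p+q) q r (tensor p q g f) f u = (\<integral>y. tensor p q g f (argA (p+q) r u y) * f (argB (p+q) q r u y) \<partial>Mq r)"
    using assms by (intro contr_eq) auto
  also have "\<dots> = (\<integral>y. g (gp p u) * (f (argA q r (fp p (2*q-2*r) u) y) * f (argB q q r (fp p (2*q-2*r) u) y)) \<partial>Mq r)"
    unfolding tensor_def A B C by (simp add: mult.assoc)
  also have "\<dots> = g (gp p u) * contr q q r f f (fp p (2*q-2*r) u)"
    using assms by (simp add: contr_eq)
  finally show "contr (p+q) q r (tensor p q g f) f u = g (gp p u) * contr q q r f f (fp p (2*q-2*r) u)" .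
qed



lemma L2_nn:
  assumes "L2 m f"
  shows "f \<in> borel_measurable (Mq m)" "(\<integral>\<^sup>+x. ennreal ((f x)^2) \<partial>Mq m) = ennreal (\<integral>x. (f x)^2 \<partial>Mq m)"
    "(\<integral>\<^sup>+x. ennreal ((f x)^2) \<partial>Mq m) \<noteq> \<infinity>"
proof -
  show "f \<in> borel_measurable (Mq m)" using assms by (simp add: L2_def)
  show e: "(\<integral>\<^sup>+x. ennreal ((f x)^2) \<partial>Mq m) = ennreal (\<integral>x. (f x)^2 \<partial>Mq m)"
    using assms by (intro nn_integral_eq_integral) (auto simp: L2_def)
  then show "(\<integral>\<^sup>+x. ennreal ((f x)^2) \<partial>Mq m) \<noteq> \<infinity>" by simp
qed

lemma part1:
  fixes q p r r2 :: nat and f g :: "(nat \<Rightarrow> real) \<Rightarrow> real"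
  assumes "q \<ge> 2" and fm: "f \<in> borel_measurable (Mq q)" and fL: "(\<integral>\<^sup>+x. ennreal ((f x)^2) \<partial>Mq q) \<noteq> \<infinity>"
    and "r \<in> {1..q-1}" and "r2 \<in> {1..q}" and "r2 + 2 * r > 2 * q"
    and "p \<ge> 1" and gm: "g \<in> borel_measurable (Mq p)" and gL: "(\<integral>\<^sup>+x. ennreal ((g x)^2) \<partial>Mq p) \<noteq> \<infinity>"
    and "r2 + 2 * r - 2 * q \<le> p"
  shows "AE t in Mq (p + 3 * q - 2 * r - 2 * r2).
            contr (p + 2 * q - 2 * r) q r2 (contr (p + q) q r (tensor p q g f) f) f t
          = contr p (2 * r - q) (r2 + 2 * r - 2 * q) g
              (contr (2 * q - 2 * r) q (2 * q - 2 * r) (contr q q r f f) f) t"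
proof -
  define c where "c = 2 * q - 2 * r"
  define d where "d = 2 * r - q"
  define rr where "rr = r2 + 2 * r - 2 * q"
  define a where "a = p - rr"
  define F where "F = contr q q r f f"
  have r: "1 \<le> r" "r \<le> q - 1" and r2: "1 \<le> r2" "r2 \<le> q" using assms by auto
  have A1: "a + (d - rr) = p + 3 * q - 2 * r - 2 * r2" and A2: "p + c = p + 2 * q - 2 * r"
    and A3: "c + d = q" and A4: "rr + c = r2" and A5: "a + rr = p"
    and rr1: "1 \<le> rr" and rrd: "rr \<le> d" and c1: "1 \<le> c"
    using assms(6,10) r r2 unfolding a_def c_def d_def rr_def by arith+
  have Fm: "F \<in> borel_measurable (Mq c)"
    using meas_contr[OF fm fm, of r] r unfolding F_def c_def by (simp add: mult_2)
  have FL0: "(\<integral>\<^sup>+x. ennreal ((F x)^2) \<partial>Mq c) \<le> (\<integral>\<^sup>+x. ennreal ((f x)^2) \<partial>Mq q) * (\<integral>\<^sup>+x. ennreal ((f x)^2) \<partial>Mq q)"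
    using contr_L2[OF fm fm, of r] r unfolding F_def c_def by (simp add: mult_2)
  have FL: "(\<integral>\<^sup>+x. ennreal ((F x)^2) \<partial>Mq c) \<noteq> \<infinity>"
  proof -
    have "(\<integral>\<^sup>+x. ennreal ((f x)^2) \<partial>Mq q) * (\<integral>\<^sup>+x. ennreal ((f x)^2) \<partial>Mq q) < \<infinity>"
      using fL by (simp add: ennreal_mult_less_top less_top)
    then have "(\<integral>\<^sup>+x. ennreal ((F x)^2) \<partial>Mq c) < \<infinity>" by (rule le_less_trans[OF FL0])
    then show ?thesis by simp
  qed
  have core': "AE t in Mq (a + (d - rr)).
    contr (a+rr+c) (c+d) (rr+c) (\<lambda>u. g (gp (a+rr) u) * F (fp (a+rr) c u)) f t
      = contr (a+rr) d rr g (contr c (c+d) c F f) t"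
    by (rule core) (use gm Fm fm gL FL fL rr1 rrd c1 A3 A5 in auto)
  have Gf: "contr (p+q) q r (tensor p q g f) f = (\<lambda>u. g (gp p u) * F (fp p c u))"
    unfolding F_def c_def using r by (intro Gsplit) auto
  show ?thesis
    using core' unfolding A1 A3 A4 A5 A2 Gf[symmetric] unfolding c_def d_def rr_def F_def .
qed



lemma enn_fin_le:
  assumes "x \<le> y * z" "y \<noteq> \<infinity>" "z \<noteq> (\<infinity>::ennreal)"
  shows "x \<noteq> \<infinity>"
proof -
  have "y * z < \<infinity>" using assms by (simp add: ennreal_mult_less_top less_top)
  then have "x < \<infinity>" by (rule le_less_trans[OF assms(1)])
  then show ?thesis by simp
qed

lemma int_sq_enn:
  assumes "f \<in> borel_measurable M"
  shows "(\<integral>x. (f x)^2 \<partial>M) = enn2real (\<integral>\<^sup>+x. ennreal ((f x)^2) \<partial>M)"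
  using assms by (intro integral_eq_nn_integral) auto

lemma part2_bound:
  fixes q p r r2 :: nat and f g :: "(nat \<Rightarrow> real) \<Rightarrow> real"
  assumes "q \<ge> 2" and fL2: "L2 q f"
    and "r \<in> {1..q-1}" and "r2 \<in> {1..q}" and "r2 + 2 * r > 2 * q"
    and "p \<ge> 1" and gL2: "L2 p g" and "r2 + 2 * r - 2 * q \<le> p"
  shows "L2norm (p + 3 * q - 2 * r - 2 * r2)
                 (contr (p + 2 * q - 2 * r) q r2 (contr (p + q) q r (tensor p q g f) f) f)
       \<le> sqrt (\<integral>x. (g x)^2 \<partial>Mq p) *
         L2norm (3 * q - 2 * r - 2 * (2 * q - 2 * r))
                    (contr (2 * q - 2 * r) q (2 * q - 2 * r) (contr q q r f f) f)"
proof -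
  define c where "c = 2 * q - 2 * r"
  define d where "d = 2 * r - q"
  define rr where "rr = r2 + 2 * r - 2 * q"
  define D where "D = p + 3 * q - 2 * r - 2 * r2"
  define F where "F = contr q q r f f"
  define h where "h = contr c q c F f"
  define L where "L = contr (p + 2 * q - 2 * r) q r2 (contr (p + q) q r (tensor p q g f) f) f"
  define R where "R = contr p d rr g h"
  have r: "1 \<le> r" "r \<le> q - 1" and r2: "1 \<le> r2" "r2 \<le> q" using assms by auto
  have h5: "r2 + 2 * r > 2 * q" and h8: "r2 + 2 * r - 2 * q \<le> p" using assms by auto
  have qr: "q < 2 * r" using h5 r2 by linarith
  have d1: "q + q - 2 * r = c" unfolding c_def by simp
  have d2: "c + q - 2 * c = d" unfolding c_def d_def using r qr by simp
  have d3: "p + d - 2 * rr = D" unfolding d_def rr_def D_def using r r2 h5 h8 qr by simp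
  have d4: "3 * q - 2 * r - 2 * (2 * q - 2 * r) = d" unfolding d_def using r qr by simp
  note dims = d1 d2 d3 d4
  have c1: "1 \<le> c" "c \<le> q" unfolding c_def using r qr by simp_all
  have rr1: "1 \<le> rr" "rr \<le> p" "rr \<le> d" unfolding rr_def d_def using h5 h8 r2 by simp_all
  have fm: "f \<in> borel_measurable (Mq q)" and fL: "(\<integral>\<^sup>+x. ennreal ((f x)^2) \<partial>Mq q) \<noteq> \<infinity>"
    using L2_nn[OF fL2] by auto
  have gm: "g \<in> borel_measurable (Mq p)" and gL: "(\<integral>\<^sup>+x. ennreal ((g x)^2) \<partial>Mq p) \<noteq> \<infinity>"
    using L2_nn[OF gL2] by auto
  have Fm: "F \<in> borel_measurable (Mq c)"
    using meas_contr[OF fm fm, of r] r dims unfolding F_def by simp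
  have FL: "(\<integral>\<^sup>+x. ennreal ((F x)^2) \<partial>Mq c) \<noteq> \<infinity>"
  proof -
    have "(\<integral>\<^sup>+x. ennreal ((F x)^2) \<partial>Mq c) \<le> (\<integral>\<^sup>+x. ennreal ((f x)^2) \<partial>Mq q) * (\<integral>\<^sup>+x. ennreal ((f x)^2) \<partial>Mq q)"
      using contr_L2[OF fm fm, of r] r dims unfolding F_def by simp
    then show ?thesis using fL fL by (rule enn_fin_le)
  qed
  have hm: "h \<in> borel_measurable (Mq d)"
    using meas_contr[OF Fm fm, of c] c1 dims unfolding h_def by simp
  have hL0: "(\<integral>\<^sup>+x. ennreal ((h x)^2) \<partial>Mq d) \<le> (\<integral>\<^sup>+x. ennreal ((F x)^2) \<partial>Mq c) * (\<integral>\<^sup>+x. ennreal ((f x)^2) \<partial>Mq q)"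
    using contr_L2[OF Fm fm, of c] c1 dims unfolding h_def by simp
  have hL: "(\<integral>\<^sup>+x. ennreal ((h x)^2) \<partial>Mq d) \<noteq> \<infinity>"
    using hL0 FL fL by (rule enn_fin_le)
  have Rm: "R \<in> borel_measurable (Mq D)"
    using meas_contr[OF gm hm, of rr] rr1 dims unfolding R_def by simp
  have RL: "(\<integral>\<^sup>+x. ennreal ((R x)^2) \<partial>Mq D) \<le> (\<integral>\<^sup>+x. ennreal ((g x)^2) \<partial>Mq p) * (\<integral>\<^sup>+x. ennreal ((h x)^2) \<partial>Mq d)"
    using contr_L2[OF gm hm, of rr] rr1 dims unfolding R_def by simp
  have AE: "AE t in Mq D. L t = R t"
    using part1[OF assms(1) fm fL assms(3,4,5,6) gm gL assms(8)]
    unfolding L_def R_def D_def h_def F_def c_def d_def rr_def .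
  have intL: "(\<integral>t. (L t)^2 \<partial>Mq D) \<le> (\<integral>x. (g x)^2 \<partial>Mq p) * (\<integral>x. (h x)^2 \<partial>Mq d)"
  proof (cases "integrable (Mq D) (\<lambda>t. (L t)^2)")
    case True
    then have Lm: "(\<lambda>t. (L t)^2) \<in> borel_measurable (Mq D)" by auto
    have "(\<integral>t. (L t)^2 \<partial>Mq D) = (\<integral>t. (R t)^2 \<partial>Mq D)"
      using Lm Rm AE by (intro integral_cong_AE) auto
    also have "\<dots> = enn2real (\<integral>\<^sup>+x. ennreal ((R x)^2) \<partial>Mq D)"
      using Rm by (rule int_sq_enn)
    also have "\<dots> \<le> enn2real ((\<integral>\<^sup>+x. ennreal ((g x)^2) \<partial>Mq p) * (\<integral>\<^sup>+x. ennreal ((h x)^2) \<partial>Mq d))"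
      using RL gL hL by (intro enn2real_mono) (auto simp: ennreal_mult_less_top less_top)
    also have "\<dots> = (\<integral>x. (g x)^2 \<partial>Mq p) * (\<integral>x. (h x)^2 \<partial>Mq d)"
      using gm hm by (simp add: enn2real_mult int_sq_enn)
    finally show ?thesis .
  next
    case False
    then have "(\<integral>t. (L t)^2 \<partial>Mq D) = 0" by (rule not_integrable_integral_eq)
    moreover have "0 \<le> (\<integral>x. (g x)^2 \<partial>Mq p) * (\<integral>x. (h x)^2 \<partial>Mq d)" by simp
    ultimately show ?thesis by simp
  qed
  have "L2norm D L = sqrt (\<integral>t. (L t)^2 \<partial>Mq D)" by (simp add: L2norm_def)
  also have "\<dots> \<le> sqrt ((\<integral>x. (g x)^2 \<partial>Mq p) * (\<integral>x. (h x)^2 \<partial>Mq d))"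
    using intL by simp
  also have "\<dots> = sqrt (\<integral>x. (g x)^2 \<partial>Mq p) * L2norm d h"
    by (simp add: L2norm_def real_sqrt_mult)
  finally show ?thesis unfolding L_def D_def h_def F_def c_def d_def dims(4)[unfolded d_def] .
qed


theorem lemma3p5:
  fixes q p r r2 :: nat and f g :: "(nat \<Rightarrow> real) \<Rightarrow> real"
  assumes "q \<ge> 2" and "L2 q f"
    and "r \<in> {1..q-1}" and "r2 \<in> {1..q}" and "r2 + 2 * r > 2 * q"
    and "p \<ge> 1" and "L2 p g" and "r2 + 2 * r - 2 * q \<le> p"
  shows "(AE t in Mq (p + 3 * q - 2 * r - 2 * r2).
            contr (p + 2 * q - 2 * r) q r2 (contr (p + q) q r (tensor p q g f) f) f t
          = contr p (2 * r - q) (r2 + 2 * r - 2 * q) g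
              (contr (2 * q - 2 * r) q (2 * q - 2 * r) (contr q q r f f) f) t)
    \<and> (\<forall>fs :: nat \<Rightarrow> (nat \<Rightarrow> real) \<Rightarrow> real.
         (\<forall>n. L2 q (fs n)) \<longrightarrow>
         (\<forall>s s2. s \<in> {1..q-1} \<longrightarrow> s2 \<in> {1..q-1} \<longrightarrow> s2 + 2 * s \<le> 2 * q \<longrightarrow> s + s2 \<noteq> q \<longrightarrow>
            (\<lambda>n. L2norm (3 * q - 2 * s - 2 * s2)
                    (contr (2 * q - 2 * s) q s2 (contr q q s (fs n) (fs n)) (fs n))) \<longlonglongrightarrow> 0) \<longrightarrow>
         (\<lambda>n. L2norm (p + 3 * q - 2 * r - 2 * r2)
                 (contr (p + 2 * q - 2 * r) q r2 (contr (p + q) q r (tensor p q g (fs n)) (fs n)) (fs n)))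
           \<longlonglongrightarrow> 0)"
proof (intro conjI allI impI)
  show "AE t in Mq (p + 3 * q - 2 * r - 2 * r2).
            contr (p + 2 * q - 2 * r) q r2 (contr (p + q) q r (tensor p q g f) f) f t
          = contr p (2 * r - q) (r2 + 2 * r - 2 * q) g
              (contr (2 * q - 2 * r) q (2 * q - 2 * r) (contr q q r f f) f) t"
    using part1[OF assms(1) L2_nn(1)[OF assms(2)] L2_nn(3)[OF assms(2)] assms(3,4,5,6)
        L2_nn(1)[OF assms(7)] L2_nn(3)[OF assms(7)] assms(8)] .
next
  fix fs :: "nat \<Rightarrow> (nat \<Rightarrow> real) \<Rightarrow> real"
  assume L2fs: "\<forall>n. L2 q (fs n)"
    and hyp: "\<forall>s s2. s \<in> {1..q-1} \<longrightarrow> s2 \<in> {1..q-1} \<longrightarrow> s2 + 2 * s \<le> 2 * q \<longrightarrow> s + s2 \<noteq> q \<longrightarrow>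
            (\<lambda>n. L2norm (3 * q - 2 * s - 2 * s2)
                    (contr (2 * q - 2 * s) q s2 (contr q q s (fs n) (fs n)) (fs n))) \<longlonglongrightarrow> 0"
  define C where "C = sqrt (\<integral>x. (g x)^2 \<partial>Mq p)"
  define N where "N n = L2norm (3 * q - 2 * r - 2 * (2 * q - 2 * r))
                    (contr (2 * q - 2 * r) q (2 * q - 2 * r) (contr q q r (fs n) (fs n)) (fs n))" for n
  have r: "1 \<le> r" "r \<le> q - 1" and r2: "1 \<le> r2" "r2 \<le> q" using assms by auto
  have qr: "q < 2 * r" using assms(5) r2 by linarith
  have N0: "N \<longlonglongrightarrow> 0"
  proof -
    have "2 * q - 2 * r \<in> {1..q-1}" using r qr by auto
    moreover have "r \<in> {1..q-1}" using r by auto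
    moreover have "2 * q - 2 * r + 2 * r \<le> 2 * q" using r by simp
    moreover have "r + (2 * q - 2 * r) \<noteq> q" using r qr by simp
    ultimately show ?thesis using hyp unfolding N_def[abs_def] by blast
  qed
  have bnd: "L2norm (p + 3 * q - 2 * r - 2 * r2)
                 (contr (p + 2 * q - 2 * r) q r2 (contr (p + q) q r (tensor p q g (fs n)) (fs n)) (fs n))
          \<le> C * N n" for n
    unfolding C_def N_def
    using part2_bound[OF assms(1) spec[OF L2fs, of n] assms(3,4,5,6,7,8)] .
  have CN: "(\<lambda>n. C * N n) \<longlonglongrightarrow> 0"
    using tendsto_mult_right_zero[OF N0] by simp
  show "(\<lambda>n. L2norm (p + 3 * q - 2 * r - 2 * r2)
                 (contr (p + 2 * q - 2 * r) q r2 (contr (p + q) q r (tensor p q g (fs n)) (fs n)) (fs n)))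
           \<longlonglongrightarrow> 0"
  proof (rule tendsto_sandwich[OF _ _ tendsto_const CN])
    show "\<forall>\<^sub>F n in sequentially. 0 \<le> L2norm (p + 3 * q - 2 * r - 2 * r2)
                 (contr (p + 2 * q - 2 * r) q r2 (contr (p + q) q r (tensor p q g (fs n)) (fs n)) (fs n))"
      by (simp add: L2norm_def)
    show "\<forall>\<^sub>F n in sequentially. L2norm (p + 3 * q - 2 * r - 2 * r2)
                 (contr (p + 2 * q - 2 * r) q r2 (contr (p + q) q r (tensor p q g (fs n)) (fs n)) (fs n)) \<le> C * N n"
      using bnd by simp
  qed
qed

end
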